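(* For every $s\in[0,1)$ there exists $C>0$ such that for all $t\ge1$, $\mathbb P_0(Y_t=0)\le C\,t^{-\frac{1-s}{2}}$, where $(Y_t)$ is the Markov chain on $\mathbb N$ with kernel $Q_s$ started at $0$.
   Context: $Q_s$ is the Markov kernel on $\mathbb N=\{0,1,\dots\}$ with $Q_s(0,1)=1$, $Q_s(r,r+1)=\max(\frac12-\frac s{4r},\frac14)$ and $Q_s(r,r-1)=1-Q_s(r,r+1)$ for $r\ge1$. *)

theory Defs
  imports "HOL-Probability.Probability"
begin

definition up_prob :: "real \<Rightarrow> nat \<Rightarrow> real" where
  "up_prob s r = max (1/2 - s / (4 * real r)) (1/4)"

definition Q :: "real \<Rightarrow> nat \<Rightarrow> nat pmf" where
  "Q s r = (if r = 0 then return_pmf 1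
            else map_pmf (\<lambda>b. if b then r + 1 else r - 1) (bernoulli_pmf (up_prob s r)))"

definition chain_law :: "real \<Rightarrow> nat \<Rightarrow> nat \<Rightarrow> nat pmf" where
  "chain_law s x t = ((\<lambda>d. bind_pmf d (Q s)) ^^ t) (return_pmf x)"

end

theory Submission
  imports Defs
begin

fun cc :: "real \<Rightarrow> nat \<Rightarrow> real" where
  "cc s 0 = 1"
| "cc s (Suc n) = cc s n * (2 * real (Suc n) - s) / (2 * real (Suc n) + s)"

definition cm :: "real \<Rightarrow> nat \<Rightarrow> real" where
  "cm s y = (if y = 0 then 0 else cc s (y - 1))"

definition pii :: "real \<Rightarrow> nat \<Rightarrow> real" where
  "pii s y = cm s y + cc s y"

fun hh :: "real \<Rightarrow> nat \<Rightarrow> nat \<Rightarrow> real" where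
  "hh s 0 y = (if y = 0 then 1 else 0)"
| "hh s (Suc t) y = (cm s y * hh s t (y - 1) + cc s y * hh s t (y + 1)) / pii s y"

definition EE :: "real \<Rightarrow> nat \<Rightarrow> nat \<Rightarrow> (nat \<Rightarrow> real) \<Rightarrow> real" where
  "EE s N t \<phi> = (\<Sum>y\<le>N. pii s y * hh s t y * \<phi> y)"

definition gg :: "real \<Rightarrow> nat \<Rightarrow> real" where
  "gg s x = (\<Sum>k<x. 1 / cc s k)"

definition BB :: "real \<Rightarrow> nat \<Rightarrow> nat \<Rightarrow> nat \<Rightarrow> real" where
  "BB s N m k = (\<Sum>x\<le>N. pii s x * hh s m x * hh s k x)"

context
  fixes s :: real
  assumes s0: "0 \<le> s" and s1: "s < 1"
begin

lemma cc_pos: "cc s n > 0"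
proof (induction n)
  case (Suc n)
  have "2 * real (Suc n) - s > 0" using s1 by simp
  moreover have "2 * real (Suc n) + s > 0" using s0 by simp
  ultimately show ?case using Suc by simp
qed simp

lemma cc_dec: "cc s (Suc n) \<le> cc s n"
proof -
  have "(2 * real (Suc n) - s) / (2 * real (Suc n) + s) \<le> 1" using s0 s1 by simp
  then show ?thesis using cc_pos[of n]
    by (metis cc.simps(2) mult_left_le less_imp_le times_divide_eq_right)
qed

lemma cm_nonneg: "cm s y \<ge> 0" using cc_pos by (simp add: cm_def less_imp_le)

lemma pii_pos: "pii s y > 0" using cc_pos[of y] cm_nonneg[of y] by (simp add: pii_def)

lemma pii0: "pii s 0 = 1" by (simp add: pii_def cm_def)

lemma hh_nonneg: "hh s t y \<ge> 0"
proof (induction t arbitrary: y)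
  case (Suc t)
  show ?case using Suc cc_pos[of y] cm_nonneg[of y] pii_pos[of y]
    by (simp add: less_imp_le)
qed simp

lemma hh_supp: "y > t \<Longrightarrow> hh s t y = 0"
proof (induction t arbitrary: y)
  case (Suc t)
  then show ?case by (simp add: cm_def)
qed simp

lemma hh_parity: "odd (t + y) \<Longrightarrow> hh s t y = 0"
proof (induction t arbitrary: y)
  case (Suc t)
  then show ?case by (cases y) (auto simp: cm_def)
qed (auto simp: odd_pos)

lemma up_prob_eq0: "x \<ge> 1 \<Longrightarrow> up_prob s x = 1/2 - s / (4 * real x)"
proof -
  assume x: "x \<ge> 1"
  have "s / (4 * real x) \<le> 1/4" using x s1 by (simp add: divide_simps)
  then show ?thesis by (simp add: up_prob_def)
qed

lemma pii_eq: "x \<ge> 1 \<Longrightarrow> pii s x = cc s (x-1) * (4 * real x) / (2 * real x + s)"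
proof -
  assume x: "x \<ge> 1"
  then obtain m where m: "x = Suc m" by (cases x) auto
  have "2 * real x + s > 0" using s0 x by simp
  then show ?thesis unfolding m pii_def cm_def by (simp add: field_simps)
qed

lemma up_prob_eq: "x \<ge> 1 \<Longrightarrow> up_prob s x = cc s x / pii s x"
proof -
  assume x: "x \<ge> 1"
  then obtain m where m: "x = Suc m" by (cases x) auto
  have p: "2 * real x + s > 0" using s0 x by simp
  have c: "cc s m > 0" by (rule cc_pos)
  have e1: "up_prob s x = 1/2 - s / (4 * real x)" by (rule up_prob_eq0[OF x])
  have e2: "pii s x = cc s m * (4 * real x) / (2 * real x + s)" using pii_eq[OF x] m by simp
  have e3: "cc s x = cc s m * (2 * real x - s) / (2 * real x + s)" using m by simp
  have xp: "real x > 0" using x by simp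
  have "cc s x / pii s x = (2*real x - s)/(4*real x)"
    unfolding e2 e3 using p c xp by (simp add: divide_simps)
  also have "\<dots> = 1/2 - s / (4 * real x)" using xp by (simp add: field_simps)
  finally show ?thesis using e1 by simp
qed

lemma down_prob_eq: "x \<ge> 1 \<Longrightarrow> 1 - up_prob s x = cm s x / pii s x"
proof -
  assume x: "x \<ge> 1"
  have "cm s x + cc s x = pii s x" by (simp add: pii_def)
  then have "cm s x / pii s x = 1 - cc s x / pii s x" using pii_pos[of x]
    by (simp add: field_simps)
  then show ?thesis using up_prob_eq[OF x] by simp
qed

lemma chain_Suc: "chain_law s x (Suc t) = bind_pmf (chain_law s x t) (Q s)"
  by (simp add: chain_law_def)

lemma set_Q: "set_pmf (Q s x) \<subseteq> {x - 1, x + 1}"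
  by (auto simp: Q_def)

lemma set_chain: "set_pmf (chain_law s 0 t) \<subseteq> {..t}"
proof (induction t)
  case 0
  then show ?case by (simp add: chain_law_def)
next
  case (Suc t)
  show ?case unfolding chain_Suc set_bind_pmf
  proof
    fix y assume "y \<in> (\<Union>x\<in>set_pmf (chain_law s 0 t). set_pmf (Q s x))"
    then obtain x where "x \<in> set_pmf (chain_law s 0 t)" "y \<in> set_pmf (Q s x)" by auto
    then have "y \<in> {x - 1, x + 1}" "x \<le> t" using Suc set_Q[of x] by blast+
    then show "y \<in> {..Suc t}" by auto
  qed
qed

lemma up_prob_range: "x \<ge> 1 \<Longrightarrow> 0 \<le> up_prob s x \<and> up_prob s x \<le> 1"
proof -
  assume x: "x \<ge> 1"
  have "s / (4 * real x) \<le> 1/4" using x s1 by (simp add: divide_simps)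
  moreover have "s / (4 * real x) \<ge> 0" using s0 by simp
  ultimately show ?thesis using up_prob_eq0[OF x] by simp
qed

lemma pmf_Q: "pmf (Q s x) y =
   (if y = x + 1 then (if x = 0 then 1 else up_prob s x) else 0)
 + (if x = y + 1 then 1 - up_prob s x else 0)"
proof (cases "x = 0")
  case True
  then show ?thesis by (simp add: Q_def pmf_return)
next
  case False
  then have x1: "x \<ge> 1" by simp
  let ?f = "\<lambda>b. if b then x + 1 else x - 1"
  have r: "0 \<le> up_prob s x" "up_prob s x \<le> 1" using up_prob_range[OF x1] by auto
  have "pmf (Q s x) y = measure (measure_pmf (bernoulli_pmf (up_prob s x))) (?f -` {y})"
    using False by (simp add: Q_def pmf_map)
  also have "\<dots> = (if y = x + 1 then up_prob s x else 0) + (if x = y + 1 then 1 - up_prob s x else 0)"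
  proof -
    consider "y = x + 1" | "x = y + 1" | "y \<noteq> x + 1" "x \<noteq> y + 1" by blast
    then show ?thesis
    proof cases
      case 1
      then have "?f -` {y} = {True}" by (auto split: if_splits)
      then show ?thesis using 1 r by (simp add: measure_pmf_single)
    next
      case 2
      then have "?f -` {y} = {False}" by (auto split: if_splits)
      then show ?thesis using 2 r by (simp add: measure_pmf_single)
    next
      case 3
      then have "?f -` {y} = {}" using False by (auto split: if_splits)
      then show ?thesis using 3 by simp
    qed
  qed
  finally show ?thesis using False by simp
qed

lemma pmf_chain: "pmf (chain_law s 0 t) y = pii s y * hh s t y"
proof (induction t arbitrary: y)
  case 0
  then show ?case by (simp add: chain_law_def pmf_return pii0)
next
  case (Suc t)
  have "pmf (chain_law s 0 (Suc t)) y = (\<Sum>x\<in>{..t}. pmf (Q s x) y * pmf (chain_law s 0 t) x)"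
    unfolding chain_Suc pmf_bind
    by (rule integral_measure_pmf_real) (use set_chain[of t] in auto)
  also have "\<dots> = (\<Sum>x\<in>{..t}. (if x = y - 1 then (if y \<ge> 1 then cm s y * hh s t x else 0) else 0)
      + (if x = y + 1 then cc s y * hh s t x else 0))"
  proof (rule sum.cong[OF refl])
    fix x
    have A: "(if y = x + 1 then (if x = 0 then 1 else up_prob s x) else 0) * pii s x
        = (if x = y - 1 then (if y \<ge> 1 then cm s y else 0) else 0)"
    proof (cases "y = x + 1")
      case True
      then show ?thesis using up_prob_eq[of x] pii_pos[of x] pii0
        by (auto simp: cm_def)
    qed auto
    have B: "(if x = y + 1 then 1 - up_prob s x else 0) * pii s x
        = (if x = y + 1 then cc s y else 0)"
      using down_prob_eq[of x] pii_pos[of x] by (auto simp: cm_def)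
    show "pmf (Q s x) y * pmf (chain_law s 0 t) x = (if x = y - 1 then (if y \<ge> 1 then cm s y * hh s t x else 0) else 0)
      + (if x = y + 1 then cc s y * hh s t x else 0)"
    proof -
      have "pmf (Q s x) y * pmf (chain_law s 0 t) x =
        ((if y = x + 1 then (if x = 0 then 1 else up_prob s x) else 0) * pii s x) * hh s t x
        + ((if x = y + 1 then 1 - up_prob s x else 0) * pii s x) * hh s t x"
        unfolding pmf_Q Suc.IH by (simp only: distrib_right mult.assoc)
      then show ?thesis unfolding A B by simp
    qed
  qed
  also have "\<dots> = cm s y * hh s t (y - 1) + cc s y * hh s t (y + 1)"
    using hh_supp[of t "y - 1"] hh_supp[of t "y + 1"]
    by (simp add: sum.distrib cm_def)
  also have "\<dots> = pii s y * hh s (Suc t) y" using pii_pos[of y] by simp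
  finally show ?case .
qed

lemma key:
  assumes "t < N"
  shows "(\<Sum>y\<le>N. pii s y * hh s (Suc t) y * \<phi> y)
       = (\<Sum>x\<le>N. hh s t x * (cc s x * \<phi> (x + 1) + cm s x * \<phi> (x - 1)))"
proof -
  obtain M where M: "N = Suc M" using assms by (cases N) auto
  have hN: "hh s t N = 0" "hh s t (N + 1) = 0" using hh_supp assms by auto
  have L: "(\<Sum>y\<le>N. pii s y * hh s (Suc t) y * \<phi> y)
     = (\<Sum>y\<le>N. cm s y * hh s t (y - 1) * \<phi> y) + (\<Sum>y\<le>N. cc s y * hh s t (y + 1) * \<phi> y)"
  proof -
    have L0: "\<And>y. pii s y * hh s (Suc t) y = cm s y * hh s t (y-1) + cc s y * hh s t (y+1)"
    proof -
      fix y
      have "pii s y \<noteq> 0" using pii_pos[of y] by simp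
      then show "pii s y * hh s (Suc t) y = cm s y * hh s t (y-1) + cc s y * hh s t (y+1)"
        by simp
    qed
    show ?thesis unfolding L0 by (simp add: sum.distrib algebra_simps)
  qed
  have R: "(\<Sum>x\<le>N. hh s t x * (cc s x * \<phi> (x + 1) + cm s x * \<phi> (x - 1)))
     = (\<Sum>x\<le>N. hh s t x * cc s x * \<phi> (x + 1)) + (\<Sum>x\<le>N. hh s t x * cm s x * \<phi> (x - 1))"
    by (simp add: sum.distrib[symmetric] algebra_simps)
  have 1: "(\<Sum>y\<le>N. cm s y * hh s t (y - 1) * \<phi> y) = (\<Sum>x\<le>N. hh s t x * cc s x * \<phi> (x + 1))"
  proof -
    have "(\<Sum>y\<le>N. cm s y * hh s t (y - 1) * \<phi> y) = (\<Sum>x\<le>M. hh s t x * cc s x * \<phi> (x + 1))"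
      unfolding M sum.atMost_Suc_shift by (simp add: cm_def mult_ac)
    also have "\<dots> = (\<Sum>x\<le>N. hh s t x * cc s x * \<phi> (x + 1))"
      unfolding M sum.atMost_Suc using hN M by simp
    finally show ?thesis .
  qed
  have 2: "(\<Sum>y\<le>N. cc s y * hh s t (y + 1) * \<phi> y) = (\<Sum>x\<le>N. hh s t x * cm s x * \<phi> (x - 1))"
  proof -
    have "(\<Sum>y\<le>N. cc s y * hh s t (y + 1) * \<phi> y) = (\<Sum>y\<le>M. cc s y * hh s t (y + 1) * \<phi> y)"
      unfolding M sum.atMost_Suc using hN M by simp
    also have "\<dots> = (\<Sum>x\<le>N. hh s t x * cm s x * \<phi> (x - 1))"
      unfolding M sum.atMost_Suc_shift by (simp add: cm_def mult_ac)
    finally show ?thesis .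
  qed
  show ?thesis unfolding L R 1 2 ..
qed

lemma key_gen:
  assumes "N \<ge> 1" "u N = 0" "u (N + 1) = 0"
  shows "(\<Sum>y\<le>N. (cm s y * u (y - 1) + cc s y * u (y + 1)) * \<phi> y)
       = (\<Sum>x\<le>N. u x * (cc s x * \<phi> (x + 1) + cm s x * \<phi> (x - 1)))"
proof -
  obtain M where M: "N = Suc M" using assms by (cases N) auto
  have hN: "u N = 0" "u (N + 1) = 0" using assms by auto
  have L: "(\<Sum>y\<le>N. (cm s y * u (y - 1) + cc s y * u (y + 1)) * \<phi> y)
     = (\<Sum>y\<le>N. cm s y * u (y - 1) * \<phi> y) + (\<Sum>y\<le>N. cc s y * u (y + 1) * \<phi> y)"
    by (simp add: sum.distrib algebra_simps)
  have R: "(\<Sum>x\<le>N. u x * (cc s x * \<phi> (x + 1) + cm s x * \<phi> (x - 1)))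
     = (\<Sum>x\<le>N. u x * cc s x * \<phi> (x + 1)) + (\<Sum>x\<le>N. u x * cm s x * \<phi> (x - 1))"
    by (simp add: sum.distrib[symmetric] algebra_simps)
  have 1: "(\<Sum>y\<le>N. cm s y * u (y - 1) * \<phi> y) = (\<Sum>x\<le>N. u x * cc s x * \<phi> (x + 1))"
  proof -
    have "(\<Sum>y\<le>N. cm s y * u (y - 1) * \<phi> y) = (\<Sum>x\<le>M. u x * cc s x * \<phi> (x + 1))"
      unfolding M sum.atMost_Suc_shift by (simp add: cm_def mult_ac)
    also have "\<dots> = (\<Sum>x\<le>N. u x * cc s x * \<phi> (x + 1))"
      unfolding M sum.atMost_Suc using hN M by simp
    finally show ?thesis .
  qed
  have 2: "(\<Sum>y\<le>N. cc s y * u (y + 1) * \<phi> y) = (\<Sum>x\<le>N. u x * cm s x * \<phi> (x - 1))"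
  proof -
    have "(\<Sum>y\<le>N. cc s y * u (y + 1) * \<phi> y) = (\<Sum>y\<le>M. cc s y * u (y + 1) * \<phi> y)"
      unfolding M sum.atMost_Suc using hN M by simp
    also have "\<dots> = (\<Sum>x\<le>N. u x * cm s x * \<phi> (x - 1))"
      unfolding M sum.atMost_Suc_shift by (simp add: cm_def mult_ac)
    finally show ?thesis .
  qed
  show ?thesis unfolding L R 1 2 ..
qed

lemma EE_step: "t < N \<Longrightarrow> EE s N (Suc t) \<phi> = (\<Sum>x\<le>N. hh s t x * (cc s x * \<phi> (x + 1) + cm s x * \<phi> (x - 1)))"
  unfolding EE_def by (rule key)

lemma EE_mono: "(\<And>y. \<phi> y \<le> \<psi> y) \<Longrightarrow> EE s N t \<phi> \<le> EE s N t \<psi>"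
  unfolding EE_def
  apply (rule sum_mono)
  apply (rule mult_left_mono)
  using mult_nonneg_nonneg[OF less_imp_le[OF pii_pos] hh_nonneg] by auto

lemma EE_zero: "EE s N 0 \<phi> = \<phi> 0"
proof -
  have "\<And>y. pii s y * hh s 0 y * \<phi> y = (if y = 0 then \<phi> 0 else 0)" using pii0 by simp
  then show ?thesis unfolding EE_def by (simp add: sum.delta)
qed

lemma EE_one: "t \<le> N \<Longrightarrow> EE s N t (\<lambda>_. 1) = 1"
proof (induction t)
  case 0
  then show ?case by (simp add: EE_zero)
next
  case (Suc t)
  then have "EE s N (Suc t) (\<lambda>_. 1) = (\<Sum>x\<le>N. hh s t x * (cc s x + cm s x))"
    by (simp add: EE_step)
  also have "\<dots> = EE s N t (\<lambda>_. 1)" by (simp add: EE_def pii_def add.commute mult_ac)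
  finally show ?case using Suc by simp
qed

lemma sq_ineq: "cc s x * (real (x + 1))^2 + cm s x * (real (x - 1))^2 \<le> pii s x * ((real x)^2 + 1)"
proof (cases x)
  case 0
  then show ?thesis by (simp add: pii_def cm_def)
next
  case (Suc m)
  have d: "cc s x \<le> cc s m" using cc_dec Suc by simp
  have c1: "cm s x = cc s m" using Suc by (simp add: cm_def)
  have c2: "real (x - 1) = real x - 1" using Suc by simp
  have e: "cc s x * (real (x + 1))^2 + cm s x * (real (x - 1))^2
    = pii s x * ((real x)^2 + 1) + 2 * real x * (cc s x - cc s m)"
    unfolding c2 pii_def c1 by (simp add: power2_eq_square algebra_simps)
  have "2 * real x * (cc s x - cc s m) \<le> 0" using d by (simp add: mult_nonneg_nonpos)
  then show ?thesis using e by linarith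
qed

lemma EE_sq: "t \<le> N \<Longrightarrow> EE s N t (\<lambda>y. (real y)^2) \<le> real t"
proof (induction t)
  case 0
  then show ?case by (simp add: EE_zero)
next
  case (Suc t)
  then have "EE s N (Suc t) (\<lambda>y. (real y)^2)
     = (\<Sum>x\<le>N. hh s t x * (cc s x * (real (x + 1))^2 + cm s x * (real (x - 1))^2))"
    by (simp add: EE_step)
  also have "\<dots> \<le> (\<Sum>x\<le>N. hh s t x * (pii s x * ((real x)^2 + 1)))"
    by (rule sum_mono) (use hh_nonneg sq_ineq in \<open>auto intro!: mult_left_mono\<close>)
  also have "\<dots> = EE s N t (\<lambda>y. (real y)^2) + EE s N t (\<lambda>_. 1)"
    by (simp add: EE_def sum.distrib[symmetric] algebra_simps)
  finally show ?case using Suc EE_one[of t N] by simp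
qed

lemma gg_Suc: "gg s (Suc x) = gg s x + 1 / cc s x"
  by (simp add: gg_def)

lemma gg_harm: "cc s x * gg s (x + 1) + cm s x * gg s (x - 1) = pii s x * gg s x + (if x = 0 then 1 else 0)"
proof (cases x)
  case 0
  then show ?thesis by (simp add: gg_def cm_def pii_def)
next
  case (Suc m)
  have n: "cc s x \<noteq> 0" "cc s m \<noteq> 0" using cc_pos by (auto simp: less_imp_neq[symmetric])
  have f: "cm s x = cc s m" "x - 1 = m" "gg s x = gg s m + 1 / cc s m" "gg s (x + 1) = gg s x + 1 / cc s x"
    using Suc gg_Suc[of x] gg_Suc[of m] by (auto simp: cm_def)
  have x0: "x \<noteq> 0" using Suc by simp
  show ?thesis unfolding f(1,2,4) pii_def unfolding f(3) using n x0
    by (simp add: field_simps)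
qed

lemma EE_gg: "t \<le> N \<Longrightarrow> EE s N t (gg s) = (\<Sum>k<t. hh s k 0)"
proof (induction t)
  case 0
  then show ?case by (simp add: EE_zero gg_def)
next
  case (Suc t)
  have "EE s N (Suc t) (gg s) = (\<Sum>x\<le>N. hh s t x * (cc s x * gg s (x + 1) + cm s x * gg s (x - 1)))"
    by (rule EE_step) (use Suc in simp)
  also have "\<dots> = (\<Sum>x\<le>N. hh s t x * (pii s x * gg s x + (if x = 0 then 1 else 0)))"
    unfolding gg_harm ..
  also have "\<dots> = EE s N t (gg s) + hh s t 0"
  proof -
    have e: "\<And>x. hh s t x * (pii s x * gg s x + (if x = 0 then 1 else 0))
      = pii s x * hh s t x * gg s x + (if x = 0 then hh s t 0 else 0)" by (simp add: algebra_simps)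
    show ?thesis unfolding e sum.distrib EE_def by (simp add: sum.delta)
  qed
  finally show ?case using Suc by simp
qed

lemma young_step:
  assumes a: "a > 0"
  shows "(a + 1) / (a + 1 - s) \<le> ((a + 1) / a) powr s"
proof -
  have "(a / (a + 1)) powr s * 1 powr (1 - s) \<le> s * (a / (a + 1)) + (1 - s) * 1"
    by (rule Youngs_inequality_0) (use s0 s1 a in auto)
  then have Y: "(a / (a + 1)) powr s \<le> (a + 1 - s) / (a + 1)"
    using a by (simp add: field_simps)
  have p1: "(a / (a + 1)) powr s > 0" using a by simp
  have e: "((a + 1) / a) powr s = 1 / (a / (a + 1)) powr s"
    using a by (simp add: powr_divide)
  have "1 / ((a + 1 - s) / (a + 1)) \<le> 1 / (a / (a + 1)) powr s"
    by (rule divide_left_mono) (use Y p1 s1 a in auto)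
  then show ?thesis using e a s1 by simp
qed

lemma D_rec: "1 / cc s (Suc k) = (1 / cc s k) * ((2 * real (Suc k) + s) / (2 * real (Suc k) - s))"
  by simp

lemma D_bound1: "k \<ge> 1 \<Longrightarrow> (1 / cc s k) * (1 + s/2) powr s \<le> (1 / cc s 1) * (real k + s/2) powr s"
proof (induction k rule: dec_induct)
  case base
  then show ?case by simp
next
  case (step k)
  define a where "a = real k + s/2"
  have a: "a > 0" using step s0 by (simp add: a_def)
  have rho: "(2 * real (Suc k) + s) / (2 * real (Suc k) - s) = (a + 1) / (a + 1 - s)"
    using s1 by (simp add: a_def field_simps)
  have rpos: "(a + 1) / (a + 1 - s) \<ge> 0" using a s1 by simp
  have c1: "1 / cc s 1 \<ge> 0" using s0 s1 by simp
  have "(1 / cc s (Suc k)) * (1 + s/2) powr s = ((1 / cc s k) * (1 + s/2) powr s) * ((a + 1) / (a + 1 - s))"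
    unfolding D_rec rho by simp
  also have "\<dots> \<le> ((1 / cc s 1) * a powr s) * ((a + 1) / (a + 1 - s))"
  proof -
    have IH': "(1 / cc s k) * (1 + s/2) powr s \<le> (1 / cc s 1) * a powr s"
      using step.IH by (simp add: a_def)
    show ?thesis by (rule mult_right_mono[OF IH' rpos])
  qed
  also have "\<dots> \<le> ((1 / cc s 1) * a powr s) * (((a + 1) / a) powr s)"
    by (rule mult_left_mono[OF young_step[OF a]]) (rule mult_nonneg_nonneg[OF c1], simp)
  also have "\<dots> = (1 / cc s 1) * (a + 1) powr s"
  proof -
    have "a powr s * ((a + 1) / a) powr s = (a * ((a + 1) / a)) powr s"
      by (rule powr_mult[symmetric])
    also have "\<dots> = (a + 1) powr s" using a by simp
    finally show ?thesis by (simp add: mult.assoc)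
  qed
  also have "\<dots> = (1 / cc s 1) * (real (Suc k) + s/2) powr s"
  proof -
    have e: "a + 1 = real (Suc k) + s/2" by (simp add: a_def)
    show ?thesis unfolding e by (rule refl)
  qed
  finally show ?case .
qed

lemma D_bound: "1 / cc s k \<le> 3 * (real k + 1) powr s"
proof (cases "k = 0")
  case True
  then show ?thesis by simp
next
  case False
  then have k: "k \<ge> 1" by simp
  have c1: "1 / cc s 1 = (2 + s) / (2 - s)" by simp
  have c1b: "1 / cc s 1 \<le> 3" unfolding c1 using s0 s1 by (simp add: divide_simps)
  have c1p: "1 / cc s 1 \<ge> 0" using s0 s1 by simp
  have g1: "(1 + s/2) powr s \<ge> 1" using s0 by (intro ge_one_powr_ge_zero) auto
  have m: "(real k + s/2) powr s \<le> (real k + 1) powr s"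
    using s0 s1 by (intro powr_mono2) auto
  have "(1 / cc s k) \<le> (1 + s/2) powr s / cc s k"
    by (rule divide_right_mono[OF g1]) (use cc_pos[of k] in simp)
  also have "\<dots> = (1 / cc s k) * (1 + s/2) powr s" by simp
  also have "\<dots> \<le> (1 / cc s 1) * (real k + s/2) powr s" by (rule D_bound1[OF k])
  also have "\<dots> \<le> 3 * (real k + 1) powr s"
    by (rule mult_mono[OF c1b m]) auto
  finally show ?thesis .
qed

lemma gg_bound: "gg s x \<le> 3 * real x powr (1 + s)"
proof (cases "x = 0")
  case True
  then show ?thesis by (simp add: gg_def)
next
  case False
  have "gg s x \<le> (\<Sum>k<x. 3 * real x powr s)"
    unfolding gg_def
  proof (rule sum_mono)
    fix k assume "k \<in> {..<x}"
    then have "real k + 1 \<le> real x" by simp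
    then have "(real k + 1) powr s \<le> real x powr s" using s0 by (intro powr_mono2) auto
    then show "1 / cc s k \<le> 3 * real x powr s" using D_bound[of k] by simp
  qed
  also have "\<dots> = 3 * real x powr (1 + s)"
    using False by (simp add: powr_add)
  finally show ?thesis .
qed

lemma pow_split:
  assumes R: "R > 0" and x: "x \<ge> 0"
  shows "x powr (1 + s) \<le> R powr (1 + s) + R powr (s - 1) * x^2"
proof (cases "x \<le> R")
  case True
  then have "x powr (1 + s) \<le> R powr (1 + s)" using s0 x by (intro powr_mono2) auto
  moreover have "R powr (s - 1) * x^2 \<ge> 0" by simp
  ultimately show ?thesis by linarith
next
  case False
  then have xp: "x > 0" using R by simp
  have "x powr (1 + s) = x powr 2 * x powr (s - 1)"
    by (simp add: powr_add[symmetric])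
  also have "\<dots> = x^2 * x powr (s - 1)" using xp by (simp add: powr_realpow)
  also have "\<dots> \<le> x^2 * R powr (s - 1)"
    using False R s1 by (intro mult_left_mono powr_mono2') auto
  finally have "x powr (1 + s) \<le> x^2 * R powr (s - 1)" .
  moreover have "R powr (1 + s) \<ge> 0" by simp
  moreover have "x^2 * R powr (s - 1) = R powr (s - 1) * x^2" by simp
  ultimately show ?thesis by linarith
qed

lemma hh_Suc_mult: "pii s x * hh s (Suc k) x = cc s x * hh s k (x + 1) + cm s x * hh s k (x - 1)"
proof -
  have "pii s x \<noteq> 0" using pii_pos[of x] by simp
  then show ?thesis by simp
qed

lemma BB_shift: "m < N \<Longrightarrow> BB s N (Suc m) k = BB s N m (Suc k)"
proof -
  assume m: "m < N"
  have "BB s N (Suc m) k = (\<Sum>x\<le>N. hh s m x * (cc s x * hh s k (x + 1) + cm s x * hh s k (x - 1)))"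
    unfolding BB_def by (rule key[OF m])
  also have "\<dots> = BB s N m (Suc k)"
    unfolding BB_def hh_Suc_mult[symmetric] by (simp only: mult_ac)
  finally show ?thesis .
qed

lemma BB_zero: "BB s N 0 K = hh s K 0"
proof -
  have "\<And>y. pii s y * hh s 0 y * hh s K y = (if y = 0 then hh s K 0 else 0)" using pii0 by simp
  then show ?thesis unfolding BB_def by (simp add: sum.delta)
qed

lemma BB_diag: "m \<le> N \<Longrightarrow> BB s N m k = hh s (m + k) 0"
proof (induction m arbitrary: k)
  case 0
  then show ?case by (simp add: BB_zero)
next
  case (Suc m)
  then have "BB s N (Suc m) k = BB s N m (Suc k)" by (intro BB_shift) simp
  also have "\<dots> = hh s (m + Suc k) 0" using Suc by simp
  finally show ?case by simp
qed

lemma jensen2: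
  fixes a b u v :: real
  assumes "a \<ge> 0" "b \<ge> 0" "a + b > 0"
  shows "(a + b) * ((a * u + b * v) / (a + b))^2 \<le> a * u^2 + b * v^2"
proof -
  have e: "(a + b) * (a * u^2 + b * v^2) - (a * u + b * v)^2 = a * b * (u - v)^2"
    by (simp add: power2_eq_square algebra_simps)
  have "a * b * (u - v)^2 \<ge> 0" using assms by simp
  then have "(a * u + b * v)^2 \<le> (a + b) * (a * u^2 + b * v^2)" using e by linarith
  then have "(a * u + b * v)^2 / (a + b) \<le> a * u^2 + b * v^2"
    using assms(3) by (simp add: divide_simps mult.commute)
  then show ?thesis using assms(3) by (simp add: power_divide power2_eq_square)
qed

lemma BB_mono: "n < N \<Longrightarrow> BB s N (Suc n) (Suc n) \<le> BB s N n n"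
proof -
  assume n: "n < N"
  define u where "u x = (hh s n x)^2" for x
  have N1: "N \<ge> 1" using n by simp
  have uN: "u N = 0" "u (N + 1) = 0" using hh_supp n by (auto simp: u_def)
  have "BB s N (Suc n) (Suc n) \<le> (\<Sum>y\<le>N. (cm s y * u (y - 1) + cc s y * u (y + 1)) * 1)"
    unfolding BB_def
  proof (rule sum_mono)
    fix y
    have p: "pii s y = cm s y + cc s y" by (simp add: pii_def)
    have "pii s y * hh s (Suc n) y * hh s (Suc n) y
      = (cm s y + cc s y) * ((cm s y * hh s n (y - 1) + cc s y * hh s n (y + 1)) / (cm s y + cc s y))^2"
      by (simp add: p power2_eq_square)
    also have "\<dots> \<le> cm s y * (hh s n (y - 1))^2 + cc s y * (hh s n (y + 1))^2"
      by (rule jensen2) (use cm_nonneg[of y] cc_pos[of y] in auto)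
    finally show "pii s y * hh s (Suc n) y * hh s (Suc n) y \<le> (cm s y * u (y - 1) + cc s y * u (y + 1)) * 1"
      by (simp add: u_def)
  qed
  also have "\<dots> = (\<Sum>x\<le>N. u x * (cc s x * 1 + cm s x * 1))"
    by (rule key_gen[OF N1 uN])
  also have "\<dots> = BB s N n n"
    unfolding BB_def u_def pii_def by (simp add: power2_eq_square algebra_simps)
  finally show ?thesis .
qed

lemma a_mono: "hh s (2 * Suc n) 0 \<le> hh s (2 * n) 0"
proof -
  have "hh s (2 * Suc n) 0 = BB s (Suc n) (Suc n) (Suc n)"
    unfolding mult_2 by (rule BB_diag[symmetric]) simp
  also have "\<dots> \<le> BB s (Suc n) n n" by (rule BB_mono) simp
  also have "\<dots> = hh s (2 * n) 0" unfolding mult_2 by (rule BB_diag) simp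
  finally show ?thesis .
qed

lemma a_anti: "j \<le> n \<Longrightarrow> hh s (2 * n) 0 \<le> hh s (2 * j) 0"
proof (induction n rule: dec_induct)
  case (step n)
  then show ?case using a_mono[of n] by linarith
qed simp

lemma EE_lin: "EE s N t (\<lambda>y. a + b * \<phi> y) = a * EE s N t (\<lambda>_. 1) + b * EE s N t \<phi>"
  unfolding EE_def by (simp add: sum.distrib sum_distrib_left algebra_simps)

lemma local_time: "T \<ge> 1 \<Longrightarrow> (\<Sum>k<T. hh s k 0) \<le> 6 * real T powr ((1 + s) / 2)"
proof -
  assume T: "T \<ge> 1"
  define R where "R = real T powr (1/2)"
  have R: "R > 0" using T by (simp add: R_def)
  have R1: "R powr (1 + s) = real T powr ((1 + s) / 2)"
    unfolding R_def by (simp add: powr_powr)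
  have R2: "R powr (s - 1) * real T = real T powr ((1 + s) / 2)"
  proof -
    have "R powr (s - 1) * real T = real T powr ((s - 1) / 2) * real T powr 1"
      unfolding R_def using T by (simp add: powr_powr)
    also have "\<dots> = real T powr ((s - 1) / 2 + 1)" by (simp add: powr_add)
    also have "(s - 1) / 2 + 1 = (1 + s) / 2" by (simp add: field_simps)
    finally show ?thesis .
  qed
  have "(\<Sum>k<T. hh s k 0) = EE s T T (gg s)" by (simp add: EE_gg)
  also have "\<dots> \<le> EE s T T (\<lambda>y. 3 * R powr (1 + s) + (3 * R powr (s - 1)) * (real y)^2)"
  proof (rule EE_mono)
    fix y
    have "gg s y \<le> 3 * real y powr (1 + s)" by (rule gg_bound)
    also have "\<dots> \<le> 3 * (R powr (1 + s) + R powr (s - 1) * (real y)^2)"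
      using pow_split[OF R, of "real y"] by simp
    finally show "gg s y \<le> 3 * R powr (1 + s) + (3 * R powr (s - 1)) * (real y)^2"
      by (simp add: algebra_simps)
  qed
  also have "\<dots> = 3 * R powr (1 + s) * EE s T T (\<lambda>_. 1) + (3 * R powr (s - 1)) * EE s T T (\<lambda>y. (real y)^2)"
    by (rule EE_lin)
  also have "\<dots> \<le> 3 * R powr (1 + s) + (3 * R powr (s - 1)) * real T"
    using EE_one[of T T] EE_sq[of T T] by (simp add: mult_left_mono)
  also have "\<dots> = 6 * real T powr ((1 + s) / 2)"
    using R1 R2 by (simp add: algebra_simps)
  finally show ?thesis .
qed

lemma main_bound: "t \<ge> 1 \<Longrightarrow> hh s t 0 \<le> 24 * real t powr (- (1 - s) / 2)"
proof -
  assume t1: "t \<ge> 1"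
  show ?thesis
  proof (cases "even t")
    case False
    then have "hh s t 0 = 0" by (intro hh_parity) simp
    then show ?thesis by simp
  next
    case True
    then obtain n where t: "t = 2 * n" by (auto elim: evenE)
    define T where "T = Suc t"
    define \<alpha> where "\<alpha> = (1 + s) / 2"
    have S: "(\<Sum>k<T. hh s k 0) \<le> 6 * real T powr \<alpha>"
      unfolding \<alpha>_def by (rule local_time) (simp add: T_def)
    have "real (Suc n) * hh s t 0 = (\<Sum>j\<le>n. hh s t 0)" by simp
    also have "\<dots> \<le> (\<Sum>j\<le>n. hh s (2 * j) 0)"
      by (rule sum_mono) (use a_anti t in auto)
    also have "\<dots> = (\<Sum>k\<in>(\<lambda>j. 2 * j) ` {..n}. hh s k 0)"
      by (simp add: sum.reindex inj_on_def)
    also have "\<dots> \<le> (\<Sum>k<T. hh s k 0)"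
      by (rule sum_mono2) (auto simp: T_def t hh_nonneg)
    also have "\<dots> \<le> 6 * real T powr \<alpha>" by (rule S)
    finally have A: "real (Suc n) * hh s t 0 \<le> 6 * real T powr \<alpha>" .
    have a0: "\<alpha> \<ge> 0" "\<alpha> \<le> 1" using s0 s1 by (auto simp: \<alpha>_def)
    have tp: "real t > 0" using t1 by simp
    have "real T powr \<alpha> \<le> (2 * real t) powr \<alpha>"
      using t1 a0 by (intro powr_mono2) (auto simp: T_def)
    also have "\<dots> = 2 powr \<alpha> * real t powr \<alpha>" by (simp add: powr_mult)
    also have "\<dots> \<le> 2 * real t powr \<alpha>"
    proof -
      have "(2::real) powr \<alpha> \<le> 2 powr 1" using a0 by (intro powr_mono) auto
      then show ?thesis by (intro mult_right_mono) auto
    qed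
    finally have B: "real T powr \<alpha> \<le> 2 * real t powr \<alpha>" .
    have n2: "real (Suc n) \<ge> real t / 2" using t by simp
    have hn: "hh s t 0 \<ge> 0" by (rule hh_nonneg)
    have "(real t / 2) * hh s t 0 \<le> real (Suc n) * hh s t 0"
      by (rule mult_right_mono[OF n2 hn])
    also have "\<dots> \<le> 12 * real t powr \<alpha>" using A B by linarith
    finally have C: "(real t / 2) * hh s t 0 \<le> 12 * real t powr \<alpha>" .
    then have "hh s t 0 \<le> 24 * real t powr \<alpha> / real t"
      using tp by (simp add: field_simps)
    also have "\<dots> = 24 * real t powr (\<alpha> - 1)"
      using tp by (simp add: powr_diff)
    also have "\<alpha> - 1 = - (1 - s) / 2" by (simp add: \<alpha>_def field_simps)
    finally show ?thesis .
  qed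
qed

end

theorem lemma6p3:
  fixes s :: real
  assumes "0 \<le> s" and "s < 1"
  shows "\<exists>C>0. \<forall>t::nat. t \<ge> 1 \<longrightarrow>
           pmf (chain_law s 0 t) 0 \<le> C * real t powr (- (1 - s) / 2)"
proof (intro exI[of _ 24] conjI allI impI)
  fix t :: nat
  assume "t \<ge> 1"
  then show "pmf (chain_law s 0 t) 0 \<le> 24 * real t powr (- (1 - s) / 2)"
    using main_bound[OF assms] pmf_chain[OF assms] pii0[OF assms] by simp
qed simp

end
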